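(* Let $\phi_{\mathrm{NH}}(y,t)=t^{-1/2}\exp(y^2/(2t))$ and $\log\Phi(\boldsymbol x,t)=\log\sum_{i=1}^N\phi_{\mathrm{NH}}(x_i,t)$ on $\mathbb{R}^N\times(0,\infty)$. Fix $(\boldsymbol x,t)$ and $(\Delta\boldsymbol x,\Delta t)$ with $t>0$ and $t+\Delta t>0$, and let $(\boldsymbol x(s),t(s))=(\boldsymbol x,t)+s(\Delta\boldsymbol x,\Delta t)$, $s\in[0,1]$, with $$t_\star:=\min_{s\in[0,1]}t(s),\qquad K_{\rm seg}:=\sup_{s\in[0,1]}\max_{1\le i\le N}\frac{x_i(s)^2}{t(s)}.$$ Then $\log\Phi$ satisfies $(1,2)$-generalized self-concordance on the segment $\mathcal C=\{(\boldsymbol x(s),t(s)):s\in[0,1]\}$ with respect to the norm $$\|(\bar{\boldsymbol x},\bar t)\|_*=A_x\|\bar{\boldsymbol x}\|_\infty+A_t|\bar t|,\qquad A_x=\frac{8\sqrt{K_{\rm seg}\vee1}}{\sqrt{t_\star}},\quad A_t=\frac{16(K_{\rm seg}\vee1)}{t_\star}.$$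
   Context: A $C^3$ function $f$ on an open set $\mathrm{dom}(f)\subseteq\mathbb{R}^p$ satisfies $(M,2)$-generalized self-concordance in a norm $\|\cdot\|_*$ on $\mathcal C\subseteq\mathrm{dom}(f)$ if for all $\boldsymbol x\in\mathcal C$ and $\boldsymbol u,\boldsymbol v\in\mathbb{R}^p$: $|\nabla^3f(\boldsymbol x)[\boldsymbol u,\boldsymbol u,\boldsymbol v]|\le M\|\boldsymbol v\|_*\,\boldsymbol u^{\mathsf T}\nabla^2f(\boldsymbol x)\boldsymbol u$. $a\vee b=\max\{a,b\}$. *)

theory Defs
  imports "HOL-Analysis.Analysis"
begin

text \<open>Three-times continuously (Frechet) differentiable on an open set S, with the
  derivative tensors given as iterated bounded linear functions.
  f1 x = Df(x), f2 x = D^2 f(x), f3 x = D^3 f(x);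
  f2 x h k = nabla^2 f(x)[h,k],  f3 x h k l = nabla^3 f(x)[h,k,l].\<close>
definition C3_derivs_on ::
  "'a::real_normed_vector set \<Rightarrow> ('a \<Rightarrow> real) \<Rightarrow> ('a \<Rightarrow> 'a \<Rightarrow>\<^sub>L real)
     \<Rightarrow> ('a \<Rightarrow> 'a \<Rightarrow>\<^sub>L 'a \<Rightarrow>\<^sub>L real) \<Rightarrow> ('a \<Rightarrow> 'a \<Rightarrow>\<^sub>L 'a \<Rightarrow>\<^sub>L 'a \<Rightarrow>\<^sub>L real) \<Rightarrow> bool" where
  "C3_derivs_on S f f1 f2 f3 \<longleftrightarrow>
     (\<forall>x\<in>S. (f has_derivative blinfun_apply (f1 x)) (at x)) \<and>
     (\<forall>x\<in>S. (f1 has_derivative blinfun_apply (f2 x)) (at x)) \<and>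
     (\<forall>x\<in>S. (f2 has_derivative blinfun_apply (f3 x)) (at x)) \<and>
     continuous_on S f3"

definition gen_self_concordant ::
  "('a::real_normed_vector \<Rightarrow> real) \<Rightarrow> 'a set \<Rightarrow> ('a \<Rightarrow> real) \<Rightarrow> real \<Rightarrow> 'a set \<Rightarrow> bool" where
  "gen_self_concordant f D nrm M C \<longleftrightarrow>
     open D \<and> C \<subseteq> D \<and>
     (\<exists>f1 f2 f3. C3_derivs_on D f f1 f2 f3 \<and>
        (\<forall>x\<in>C. \<forall>u v.
           \<bar>blinfun_apply (blinfun_apply (blinfun_apply (f3 x) u) u) v\<bar>
             \<le> M * nrm v * blinfun_apply (blinfun_apply (f2 x) u) u))"

definition phi_NH :: "real \<Rightarrow> real \<Rightarrow> real" where
  "phi_NH y t = t powr (-1/2) * exp (y\<^sup>2 / (2 * t))"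

definition logPhi :: "(real^'n) \<times> real \<Rightarrow> real" where
  "logPhi z = ln (\<Sum>i\<in>UNIV. phi_NH (fst z $ i) (snd z))"

end

theory Submission
  imports Defs
begin

definition Rb :: "'b::euclidean_space \<Rightarrow> 'c::real_normed_vector \<Rightarrow> 'b \<Rightarrow>\<^sub>L 'c" where
  "Rb b w = blinfun_scaleR_left w o\<^sub>L blinfun_inner_left b"

lemma Rb_apply[simp]: "blinfun_apply (Rb b w) v = (v \<bullet> b) *\<^sub>R w"
  by (simp add: Rb_def)

lemma bl_Rb: "bounded_linear (Rb b)"
  unfolding Rb_def
  by (rule bounded_linear_compose[OF bounded_bilinear.bounded_linear_left[OF bounded_bilinear_blinfun_compose] bounded_linear_blinfun_scaleR_left])

lemma blinfun_decomp:
  fixes A :: "'b::euclidean_space \<Rightarrow>\<^sub>L 'c::real_normed_vector"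
  shows "A = (\<Sum>b\<in>Basis. Rb b (blinfun_apply A b))"
proof (rule blinfun_eqI)
  fix v :: 'b
  have "blinfun_apply A v = blinfun_apply A (\<Sum>b\<in>Basis. (v \<bullet> b) *\<^sub>R b)"
    by (simp add: euclidean_representation)
  also have "\<dots> = (\<Sum>b\<in>Basis. (v \<bullet> b) *\<^sub>R blinfun_apply A b)"
    by (simp add: blinfun.sum_right blinfun.scaleR_right)
  finally show "blinfun_apply A v = blinfun_apply (\<Sum>b\<in>Basis. Rb b (blinfun_apply A b)) v"
    by (simp add: blinfun.sum_left)
qed

lemma lift_deriv:
  fixes F :: "'a::real_normed_vector \<Rightarrow> 'b::euclidean_space \<Rightarrow>\<^sub>L 'c::real_normed_vector"
    and F' :: "'a \<Rightarrow> 'b \<Rightarrow>\<^sub>L 'c"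
  assumes "\<And>b. b \<in> Basis \<Longrightarrow> ((\<lambda>z. blinfun_apply (F z) b) has_derivative (\<lambda>h. blinfun_apply (F' h) b)) (at x)"
  shows "(F has_derivative F') (at x)"
proof -
  have e1: "F = (\<lambda>z. \<Sum>b\<in>Basis. Rb b (blinfun_apply (F z) b))"
    by (rule ext, rule blinfun_decomp)
  have e2: "F' = (\<lambda>h. \<Sum>b\<in>Basis. Rb b (blinfun_apply (F' h) b))"
    by (rule ext, rule blinfun_decomp)
  have "((\<lambda>z. \<Sum>b\<in>Basis. Rb b (blinfun_apply (F z) b)) has_derivative
        (\<lambda>h. \<Sum>b\<in>Basis. Rb b (blinfun_apply (F' h) b))) (at x)"
    by (intro has_derivative_sum bounded_linear.has_derivative[OF bl_Rb] assms)
  then show ?thesis using e1 e2 by metis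
qed

lemma lift_cont:
  fixes F :: "'a::topological_space \<Rightarrow> 'b::euclidean_space \<Rightarrow>\<^sub>L 'c::real_normed_vector"
  assumes "\<And>b. b \<in> Basis \<Longrightarrow> continuous_on S (\<lambda>z. blinfun_apply (F z) b)"
  shows "continuous_on S F"
  using assms unfolding continuous_on_def
  by (auto intro!: tendsto_componentwise1)

type_synonym 'n pt = "(real^'n) \<times> real"

definition hh :: "'n::finite \<Rightarrow> 'n pt \<Rightarrow> real" where
  "hh i z = (fst z $ i)\<^sup>2 / (2 * snd z) - ln (snd z) / 2"

definition X :: "'n::finite \<Rightarrow> 'n pt \<Rightarrow> 'n pt \<Rightarrow> real" where
  "X i z u = fst z $ i * fst u $ i / snd z - (fst z $ i)\<^sup>2 * snd u / (2 * (snd z)\<^sup>2)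
     - snd u / (2 * snd z)"

definition H :: "'n::finite \<Rightarrow> 'n pt \<Rightarrow> 'n pt \<Rightarrow> 'n pt \<Rightarrow> real" where
  "H i z u v = fst u $ i * fst v $ i / snd z
     - fst z $ i * (fst u $ i * snd v + fst v $ i * snd u) / (snd z)\<^sup>2
     + (fst z $ i)\<^sup>2 * snd u * snd v / (snd z)^3 + snd u * snd v / (2 * (snd z)\<^sup>2)"

definition T :: "'n::finite \<Rightarrow> 'n pt \<Rightarrow> 'n pt \<Rightarrow> 'n pt \<Rightarrow> 'n pt \<Rightarrow> real" where
  "T i z u v w = - fst u $ i * fst v $ i * snd w / (snd z)\<^sup>2
     - fst w $ i * (fst u $ i * snd v + fst v $ i * snd u) / (snd z)\<^sup>2
     + 2 * fst z $ i * (fst u $ i * snd v + fst v $ i * snd u) * snd w / (snd z)^3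
     + 2 * fst z $ i * fst w $ i * snd u * snd v / (snd z)^3
     - 3 * (fst z $ i)\<^sup>2 * snd u * snd v * snd w / (snd z)^4
     - snd u * snd v * snd w / (snd z)^3"

lemma d_nth: "((\<lambda>z::'n::finite pt. fst z $ i) has_derivative (\<lambda>h. fst h $ i)) (at z)"
  by (rule bounded_linear_imp_has_derivative, rule bounded_linear_compose[OF bounded_linear_vec_nth bounded_linear_fst])

lemma d_snd: "((\<lambda>z::'n::finite pt. snd z) has_derivative (\<lambda>h. snd h)) (at z)"
  by (auto intro!: derivative_eq_intros)

lemma d_hh: assumes "snd z > 0"
  shows "(hh i has_derivative X i z) (at z)"
  unfolding hh_def[abs_def] X_def[abs_def]
  apply (rule has_derivative_eq_rhs)
  apply (intro d_nth d_snd derivative_eq_intros)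
  apply (rule d_nth)
  using assms apply (auto simp: field_simps power2_eq_square)
  done

lemma d_X: assumes "snd z > 0"
  shows "((\<lambda>z. X i z u) has_derivative H i z u) (at z)"
  unfolding X_def[abs_def] H_def[abs_def]
  apply (rule has_derivative_eq_rhs)
  apply ((rule d_nth d_snd derivative_eq_intros refl | (use assms in \<open>simp; fail\<close>))+)[1]
  apply (rule ext)
  using assms apply (simp add: field_simps eval_nat_numeral)
  done

lemma d_H: assumes "snd z > 0"
  shows "((\<lambda>z. H i z u v) has_derivative T i z u v) (at z)"
  unfolding T_def[abs_def] H_def[abs_def]
  apply (rule has_derivative_eq_rhs)
  apply ((rule d_nth d_snd derivative_eq_intros refl | (use assms in \<open>simp; fail\<close>))+)[1]
  apply (rule ext)
  using assms apply (simp add: field_simps eval_nat_numeral)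
  done

definition ee :: "'n::finite \<Rightarrow> 'n pt \<Rightarrow> real" where "ee i z = exp (hh i z)"
definition SS :: "'n::finite pt \<Rightarrow> real" where "SS z = (\<Sum>i\<in>UNIV. ee i z)"
definition pp :: "'n::finite \<Rightarrow> 'n pt \<Rightarrow> real" where "pp i z = ee i z / SS z"
definition mm :: "'n::finite pt \<Rightarrow> 'n pt \<Rightarrow> real" where "mm z u = (\<Sum>i\<in>UNIV. pp i z * X i z u)"

lemma SS_pos: "SS z > 0"
  unfolding SS_def ee_def by (rule sum_pos) auto

lemma pp_sum: "(\<Sum>i\<in>UNIV. pp i z) = 1"
  using SS_pos[of z] unfolding pp_def by (simp add: sum_divide_distrib[symmetric] SS_def)

lemma mm_alt: "mm z u = (\<Sum>i\<in>UNIV. ee i z * X i z u) / SS z"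
  unfolding mm_def pp_def by (simp add: sum_divide_distrib)

lemma d_ee: assumes "snd z > 0"
  shows "(ee i has_derivative (\<lambda>w. ee i z * X i z w)) (at z)"
  unfolding ee_def[abs_def]
  by (rule has_derivative_eq_rhs, rule derivative_eq_intros d_hh[OF assms])+ auto

lemma d_SS: assumes "snd z > 0"
  shows "(SS has_derivative (\<lambda>w. \<Sum>i\<in>UNIV. ee i z * X i z w)) (at z)"
  unfolding SS_def[abs_def]
  by (rule has_derivative_sum, rule d_ee[OF assms])

lemma d_lnSS: assumes "snd z > 0"
  shows "((\<lambda>z. ln (SS z)) has_derivative mm z) (at z)"
  apply (rule has_derivative_eq_rhs)
   apply (rule derivative_eq_intros d_SS[OF assms] SS_pos)+
  using SS_pos[of z] by (auto simp: mm_alt field_simps)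

lemma d_pp: assumes "snd z > 0"
  shows "(pp i has_derivative (\<lambda>w. pp i z * (X i z w - mm z w))) (at z)"
  unfolding pp_def[abs_def]
  apply (rule has_derivative_eq_rhs)
   apply (rule derivative_eq_intros d_SS[OF assms] d_ee[OF assms])+
  using SS_pos[of z] apply (simp; fail)
  using SS_pos[of z] by (auto simp: mm_alt field_simps)

lemma d_mm: assumes "snd z > 0"
  shows "((\<lambda>z. mm z u) has_derivative
    (\<lambda>w. \<Sum>i\<in>UNIV. pp i z * (X i z w - mm z w) * X i z u + pp i z * H i z u w)) (at z)"
  unfolding mm_def[of _ u]
  apply (rule has_derivative_eq_rhs)
   apply (rule derivative_eq_intros d_pp[OF assms] d_X[OF assms])+
  by (auto simp: algebra_simps)

lemma alg3:
  fixes p Xu Xv Xw Huv Huw Hvw T :: "'i \<Rightarrow> real"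
  assumes "finite I" "sum p I = 1" "mw = (\<Sum>i\<in>I. p i * Xw i)"
  shows "(\<Sum>i\<in>I. p i * (T i + (Xu i * Hvw i + Huw i * Xv i)) + p i * (Xw i - mw) * (Huv i + Xu i * Xv i))
     - (mu * (\<Sum>i\<in>I. p i * (Xw i - mw) * Xv i + p i * Hvw i) + (\<Sum>i\<in>I. p i * (Xw i - mw) * Xu i + p i * Huw i) * mv)
   = (\<Sum>i\<in>I. p i * (T i + (Xw i - mw) * Huv i + Huw i * (Xv i - mv) + Hvw i * (Xu i - mu)
        + (Xu i - mu) * (Xv i - mv) * (Xw i - mw)))"
proof -
  have s0: "(\<Sum>i\<in>I. p i * (Xw i - mw)) = 0"
    using assms by (simp add: right_diff_distrib sum_subtractf sum_distrib_right[symmetric])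
  have "(\<Sum>i\<in>I. p i * (T i + (Xu i * Hvw i + Huw i * Xv i)) + p i * (Xw i - mw) * (Huv i + Xu i * Xv i))
     - (mu * (\<Sum>i\<in>I. p i * (Xw i - mw) * Xv i + p i * Hvw i) + (\<Sum>i\<in>I. p i * (Xw i - mw) * Xu i + p i * Huw i) * mv)
     = (\<Sum>i\<in>I. p i * (T i + (Xu i * Hvw i + Huw i * Xv i)) + p i * (Xw i - mw) * (Huv i + Xu i * Xv i)
          - mu * (p i * (Xw i - mw) * Xv i + p i * Hvw i) - (p i * (Xw i - mw) * Xu i + p i * Huw i) * mv)"
    by (simp add: sum_subtractf sum_distrib_left sum_distrib_right)
  also have "\<dots> = (\<Sum>i\<in>I. p i * (T i + (Xw i - mw) * Huv i + Huw i * (Xv i - mv) + Hvw i * (Xu i - mu)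
        + (Xu i - mu) * (Xv i - mv) * (Xw i - mw)) - (mu * mv) * (p i * (Xw i - mw)))"
    by (rule sum.cong) (simp, algebra)
  also have "\<dots> = (\<Sum>i\<in>I. p i * (T i + (Xw i - mw) * Huv i + Huw i * (Xv i - mv) + Hvw i * (Xu i - mu)
        + (Xu i - mu) * (Xv i - mv) * (Xw i - mw)))"
    by (simp add: sum_subtractf sum_distrib_left[symmetric] s0)
  finally show ?thesis .
qed

definition Q2 :: "'n::finite pt \<Rightarrow> 'n pt \<Rightarrow> 'n pt \<Rightarrow> real" where
  "Q2 z u v = (\<Sum>i\<in>UNIV. pp i z * (H i z u v + X i z u * X i z v)) - mm z u * mm z v"

definition Xc :: "'n::finite \<Rightarrow> 'n pt \<Rightarrow> 'n pt \<Rightarrow> real" where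
  "Xc i z u = X i z u - mm z u"

definition Q3 :: "'n::finite pt \<Rightarrow> 'n pt \<Rightarrow> 'n pt \<Rightarrow> 'n pt \<Rightarrow> real" where
  "Q3 z u v w = (\<Sum>i\<in>UNIV. pp i z * (T i z u v w + Xc i z w * H i z u v + H i z u w * Xc i z v
      + H i z v w * Xc i z u + Xc i z u * Xc i z v * Xc i z w))"

lemma d_Q2: assumes "snd z > 0"
  shows "((\<lambda>z. Q2 z u v) has_derivative Q3 z u v) (at z)"
  unfolding Q2_def
  apply (rule has_derivative_eq_rhs)
   apply (rule derivative_eq_intros d_pp[OF assms] d_X[OF assms] d_H[OF assms] d_mm[OF assms] refl)+
  apply (rule ext)
  unfolding Q3_def Xc_def
  by (rule alg3) (auto simp: pp_sum mm_def)

lemma X_poly: "X i z u = fst u $ i * (fst z $ i / snd z) + snd u * (- (fst z $ i)\<^sup>2 / (2 * (snd z)\<^sup>2) - 1 / (2 * snd z))"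
  by (cases "snd z = 0"; simp add: X_def field_simps)

lemma H_poly: "H i z u v = fst u $ i * fst v $ i * (1 / snd z)
     - (fst u $ i * snd v + fst v $ i * snd u) * (fst z $ i / (snd z)\<^sup>2)
     + snd u * snd v * ((fst z $ i)\<^sup>2 / (snd z)^3 + 1 / (2 * (snd z)\<^sup>2))"
  by (cases "snd z = 0"; simp add: H_def field_simps)

lemma T_poly: "T i z u v w = - (fst u $ i * fst v $ i * snd w + fst w $ i * fst u $ i * snd v + fst w $ i * fst v $ i * snd u) * (1 / (snd z)\<^sup>2)
     + (fst u $ i * snd v * snd w + fst v $ i * snd u * snd w + fst w $ i * snd u * snd v) * (2 * fst z $ i / (snd z)^3)
     - snd u * snd v * snd w * (3 * (fst z $ i)\<^sup>2 / (snd z)^4 + 1 / (snd z)^3)"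
  by (cases "snd z = 0"; simp add: T_def field_simps)

lemma X_add: "X i z (u + u') = X i z u + X i z u'" and X_scale: "X i z (r *\<^sub>R u) = r * X i z u"
  by (simp_all only: X_poly) (simp_all add: algebra_simps add_divide_distrib diff_divide_distrib)

lemma H_add1: "H i z (u + u') v = H i z u v + H i z u' v" and H_scale1: "H i z (r *\<^sub>R u) v = r * H i z u v"
  and H_add2: "H i z v (u + u') = H i z v u + H i z v u'" and H_scale2: "H i z v (r *\<^sub>R u) = r * H i z v u"
  by (simp_all only: H_poly) (simp_all add: algebra_simps add_divide_distrib diff_divide_distrib)

lemma T_add1: "T i z (u + u') v w = T i z u v w + T i z u' v w" and T_scale1: "T i z (r *\<^sub>R u) v w = r * T i z u v w"
  and T_add2: "T i z v (u + u') w = T i z v u w + T i z v u' w" and T_scale2: "T i z v (r *\<^sub>R u) w = r * T i z v u w"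
  and T_add3: "T i z v w (u + u') = T i z v w u + T i z v w u'" and T_scale3: "T i z v w (r *\<^sub>R u) = r * T i z v w u"
  by (simp_all only: T_poly) (simp_all add: algebra_simps add_divide_distrib diff_divide_distrib)
lemma mm_add: "mm z (u + u') = mm z u + mm z u'" and mm_scale: "mm z (r *\<^sub>R u) = r * mm z u"
  by (simp_all add: mm_def X_add X_scale algebra_simps sum.distrib sum_distrib_left)

lemma Xc_add: "Xc i z (u + u') = Xc i z u + Xc i z u'" and Xc_scale: "Xc i z (r *\<^sub>R u) = r * Xc i z u"
  by (simp_all add: Xc_def X_add X_scale mm_add mm_scale algebra_simps)

lemmas lin_simps = X_add X_scale H_add1 H_scale1 H_add2 H_scale2 T_add1 T_scale1 T_add2 T_scale2
  T_add3 T_scale3 mm_add mm_scale Xc_add Xc_scale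


lemma lin_mm: "linear (mm z)"
  by (rule linearI) (simp_all add: lin_simps)

lemma Q2_add1: "Q2 z (u+u') v = Q2 z u v + Q2 z u' v"
proof -
  have "(\<Sum>i\<in>UNIV. pp i z * (H i z (u+u') v + X i z (u+u') * X i z v))
    = (\<Sum>i\<in>UNIV. pp i z * (H i z u v + X i z u * X i z v)) + (\<Sum>i\<in>UNIV. pp i z * (H i z u' v + X i z u' * X i z v))"
    by (simp only: sum.distrib[symmetric]; rule sum.cong[OF refl]; simp only: lin_simps; algebra)
  then show ?thesis by (simp add: Q2_def mm_add algebra_simps)
qed

lemma Q2_scale1: "Q2 z (r *\<^sub>R u) v = r * Q2 z u v"
proof -
  have "(\<Sum>i\<in>UNIV. pp i z * (H i z (r *\<^sub>R u) v + X i z (r *\<^sub>R u) * X i z v))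
    = r * (\<Sum>i\<in>UNIV. pp i z * (H i z u v + X i z u * X i z v))"
    by (simp only: sum_distrib_left; rule sum.cong[OF refl]; simp only: lin_simps; algebra)
  then show ?thesis by (simp add: Q2_def mm_scale algebra_simps)
qed

lemma Q2_add2: "Q2 z v (u+u') = Q2 z v u + Q2 z v u'"
proof -
  have "(\<Sum>i\<in>UNIV. pp i z * (H i z v (u+u') + X i z v * X i z (u+u')))
    = (\<Sum>i\<in>UNIV. pp i z * (H i z v u + X i z v * X i z u)) + (\<Sum>i\<in>UNIV. pp i z * (H i z v u' + X i z v * X i z u'))"
    by (simp only: sum.distrib[symmetric]; rule sum.cong[OF refl]; simp only: lin_simps; algebra)
  then show ?thesis by (simp add: Q2_def mm_add algebra_simps)
qed

lemma Q2_scale2: "Q2 z v (r *\<^sub>R u) = r * Q2 z v u"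
proof -
  have "(\<Sum>i\<in>UNIV. pp i z * (H i z v (r *\<^sub>R u) + X i z v * X i z (r *\<^sub>R u)))
    = r * (\<Sum>i\<in>UNIV. pp i z * (H i z v u + X i z v * X i z u))"
    by (simp only: sum_distrib_left; rule sum.cong[OF refl]; simp only: lin_simps; algebra)
  then show ?thesis by (simp add: Q2_def mm_scale algebra_simps)
qed

lemma lin_Q2_1: "linear (\<lambda>u. Q2 z u v)"
  by (rule linearI) (simp_all add: Q2_add1 Q2_scale1)

lemma lin_Q2_2: "linear (\<lambda>v. Q2 z u v)"
  by (rule linearI) (simp_all add: Q2_add2 Q2_scale2)

lemma Q3_add1: "Q3 z (u+u') v w = Q3 z u v w + Q3 z u' v w"
  unfolding Q3_def by (simp only: sum.distrib[symmetric]; rule sum.cong[OF refl]; simp only: lin_simps; algebra)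

lemma Q3_add2: "Q3 z v (u+u') w = Q3 z v u w + Q3 z v u' w"
  unfolding Q3_def by (simp only: sum.distrib[symmetric]; rule sum.cong[OF refl]; simp only: lin_simps; algebra)

lemma Q3_add3: "Q3 z v w (u+u') = Q3 z v w u + Q3 z v w u'"
  unfolding Q3_def by (simp only: sum.distrib[symmetric]; rule sum.cong[OF refl]; simp only: lin_simps; algebra)

lemma Q3_scale1: "Q3 z (r *\<^sub>R u) v w = r * Q3 z u v w"
  unfolding Q3_def by (simp only: sum_distrib_left; rule sum.cong[OF refl]; simp only: lin_simps; algebra)

lemma Q3_scale2: "Q3 z v (r *\<^sub>R u) w = r * Q3 z v u w"
  unfolding Q3_def by (simp only: sum_distrib_left; rule sum.cong[OF refl]; simp only: lin_simps; algebra)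

lemma Q3_scale3: "Q3 z v w (r *\<^sub>R u) = r * Q3 z v w u"
  unfolding Q3_def by (simp only: sum_distrib_left; rule sum.cong[OF refl]; simp only: lin_simps; algebra)

lemma lin_Q3_1: "linear (\<lambda>u. Q3 z u v w)"
  by (rule linearI) (simp_all add: Q3_add1 Q3_scale1)

lemma lin_Q3_2: "linear (\<lambda>v. Q3 z u v w)"
  by (rule linearI) (simp_all add: Q3_add2 Q3_scale2)

lemma lin_Q3_3: "linear (\<lambda>w. Q3 z u v w)"
  by (rule linearI) (simp_all add: Q3_add3 Q3_scale3)

lemma bl_of_lin: "linear (f :: 'a::euclidean_space \<Rightarrow> 'b::real_normed_vector) \<Longrightarrow> bounded_linear f"
  using linear_conv_bounded_linear by blast

lemma bl_nested:
  fixes Q :: "'a::euclidean_space \<Rightarrow> 'b::euclidean_space \<Rightarrow> 'c::real_normed_vector"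
  assumes bl: "\<And>h. bounded_linear (Q h)" and lin: "\<And>k. linear (\<lambda>h. Q h k)"
  shows "bounded_linear (\<lambda>h. Blinfun (Q h))"
proof -
  have "linear (\<lambda>h. Blinfun (Q h))"
  proof (rule linearI)
    fix h1 h2 :: 'a and r :: real
    show "Blinfun (Q (h1 + h2)) = Blinfun (Q h1) + Blinfun (Q h2)"
      by (rule blinfun_eqI) (simp add: bounded_linear_Blinfun_apply[OF bl] plus_blinfun.rep_eq linear_add[OF lin])
    show "Blinfun (Q (r *\<^sub>R h1)) = r *\<^sub>R Blinfun (Q h1)"
      by (rule blinfun_eqI) (simp add: bounded_linear_Blinfun_apply[OF bl] scaleR_blinfun.rep_eq linear_scale[OF lin])
  qed
  then show ?thesis by (rule bl_of_lin)
qed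

definition f1 :: "'n::finite pt \<Rightarrow> 'n pt \<Rightarrow>\<^sub>L real" where "f1 z = Blinfun (mm z)"
definition f2 :: "'n::finite pt \<Rightarrow> 'n pt \<Rightarrow>\<^sub>L 'n pt \<Rightarrow>\<^sub>L real" where
  "f2 z = Blinfun (\<lambda>h. Blinfun (\<lambda>k. Q2 z h k))"
definition f3 :: "'n::finite pt \<Rightarrow> 'n pt \<Rightarrow>\<^sub>L 'n pt \<Rightarrow>\<^sub>L 'n pt \<Rightarrow>\<^sub>L real" where
  "f3 z = Blinfun (\<lambda>h. Blinfun (\<lambda>k. Blinfun (\<lambda>l. Q3 z k l h)))"

lemma f1_apply[simp]: "blinfun_apply (f1 z) u = mm z u"
  unfolding f1_def by (simp add: bounded_linear_Blinfun_apply bl_of_lin lin_mm)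

lemma bl_Q2: "bounded_linear (\<lambda>k. Q2 z h k)" by (rule bl_of_lin, rule lin_Q2_2)

lemma f2_apply[simp]: "blinfun_apply (blinfun_apply (f2 z) h) k = Q2 z h k"
proof -
  have "bounded_linear (\<lambda>h. Blinfun (\<lambda>k. Q2 z h k))"
    by (rule bl_nested[OF bl_Q2 lin_Q2_1])
  then show ?thesis unfolding f2_def
    by (simp add: bounded_linear_Blinfun_apply bl_Q2)
qed

lemma bl_Q3: "bounded_linear (\<lambda>l. Q3 z k l h)" by (rule bl_of_lin, rule lin_Q3_2)

lemma bl_Q3_mid: "bounded_linear (\<lambda>k. Blinfun (\<lambda>l. Q3 z k l h))"
  by (rule bl_nested[OF bl_Q3 lin_Q3_1])

lemma lin_Q3_mid: "linear (\<lambda>h. Blinfun (\<lambda>l. Q3 z k l h))"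
  using bl_nested[of "\<lambda>h l. Q3 z k l h", OF bl_Q3 lin_Q3_3] bounded_linear.linear by blast

lemma f3_apply[simp]: "blinfun_apply (blinfun_apply (blinfun_apply (f3 z) h) k) l = Q3 z k l h"
proof -
  have "bounded_linear (\<lambda>h. Blinfun (\<lambda>k. Blinfun (\<lambda>l. Q3 z k l h)))"
    by (rule bl_nested[OF bl_Q3_mid lin_Q3_mid])
  then show ?thesis unfolding f3_def
    by (simp add: bounded_linear_Blinfun_apply bl_Q3_mid bl_Q3)
qed

abbreviation "Dom \<equiv> {z :: 'n::finite pt. snd z > 0}"

lemma open_Dom: "open {z :: 'n::finite pt. snd z > 0}"
  by (intro open_Collect_less continuous_intros)

lemma logPhi_eq: "snd y > 0 \<Longrightarrow> logPhi y = ln (SS y)"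
  unfolding logPhi_def SS_def ee_def hh_def phi_NH_def
  by (simp add: powr_def exp_add[symmetric] exp_diff algebra_simps)

lemma H_sym: "H i z u w = H i z w u"
  by (simp add: H_def algebra_simps)

lemma d_mm2: assumes "snd z > 0"
  shows "((\<lambda>z. mm z u) has_derivative (\<lambda>w. Q2 z w u)) (at z)"
proof (rule has_derivative_eq_rhs[OF d_mm[OF assms]], rule ext)
  fix w
  have "Q2 z w u = (\<Sum>i\<in>UNIV. pp i z * (H i z w u + X i z w * X i z u)) - mm z w * (\<Sum>i\<in>UNIV. pp i z * X i z u)"
    by (simp add: Q2_def mm_def)
  also have "\<dots> = (\<Sum>i\<in>UNIV. pp i z * (H i z w u + X i z w * X i z u) - mm z w * (pp i z * X i z u))"
    by (simp add: sum_subtractf sum_distrib_left)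
  also have "\<dots> = (\<Sum>i\<in>UNIV. pp i z * (X i z w - mm z w) * X i z u + pp i z * H i z u w)"
    by (rule sum.cong[OF refl]) (simp add: H_sym algebra_simps)
  finally show "(\<Sum>i\<in>UNIV. pp i z * (X i z w - mm z w) * X i z u + pp i z * H i z u w) = Q2 z w u" by simp
qed

lemma cont_of_deriv:
  assumes "\<And>x. x \<in> S \<Longrightarrow> (f has_derivative f' x) (at x)"
  shows "continuous_on S f"
  using assms by (intro continuous_at_imp_continuous_on) (auto dest: has_derivative_continuous)

lemma cont_pp: "continuous_on Dom (pp i)"
  by (rule cont_of_deriv, rule d_pp) auto

lemma cont_X: "continuous_on Dom (\<lambda>z. X i z u)"
  by (rule cont_of_deriv, rule d_X) auto

lemma cont_H: "continuous_on Dom (\<lambda>z. H i z u v)"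
  by (rule cont_of_deriv, rule d_H) auto

lemma cont_mm: "continuous_on Dom (\<lambda>z. mm z u)"
  by (rule cont_of_deriv, rule d_mm) auto

lemma cont_T: "continuous_on Dom (\<lambda>z. T i z u v w)"
  unfolding T_def by (intro continuous_intros) auto

lemma cont_Q3: "continuous_on Dom (\<lambda>z. Q3 z u v w)"
  unfolding Q3_def Xc_def by (intro continuous_intros cont_pp cont_X cont_H cont_mm cont_T)

lemma C3: "C3_derivs_on {z :: 'n::finite pt. snd z > 0} logPhi f1 f2 f3"
  unfolding C3_derivs_on_def
proof (intro conjI ballI)
  fix x :: "'n pt" assume x: "x \<in> Dom"
  then have x0: "snd x > 0" by simp
  have e1: "blinfun_apply (f1 x) = mm x" by (rule ext) simp
  show "(logPhi has_derivative blinfun_apply (f1 x)) (at x)"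
    unfolding e1
    by (rule has_derivative_transform_within_open[OF d_lnSS[OF x0] open_Dom x]) (simp add: logPhi_eq)
  show "(f1 has_derivative blinfun_apply (f2 x)) (at x)"
    by (rule lift_deriv) (simp add: d_mm2[OF x0])
  show "(f2 has_derivative blinfun_apply (f3 x)) (at x)"
    by (rule lift_deriv, rule lift_deriv) (simp add: d_Q2[OF x0])
next
  show "continuous_on Dom f3"
    by (intro lift_cont) (simp add: cont_Q3)
qed

lemma core:
  fixes \<alpha> \<beta> \<gamma> \<rho> e d C Y :: real
  assumes g: "\<bar>\<gamma>\<bar> \<le> C" and dY: "\<bar>d\<bar> \<le> 2 * Y"
  shows "\<bar>(- \<rho> * (\<alpha>\<^sup>2 + \<beta>\<^sup>2) - 2 * \<beta> * \<alpha> * \<gamma>) + 2 * e * (\<alpha> * \<gamma> + \<beta> * \<rho> / 2)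
           + d * (\<alpha>\<^sup>2 + \<beta>\<^sup>2 / 2) + e\<^sup>2 * d\<bar>
         \<le> (3 * \<bar>\<rho>\<bar> + 3 * C + 2 * Y) * ((\<alpha>\<^sup>2 + \<beta>\<^sup>2 / 2) + e\<^sup>2)"
proof -
  define Hh where "Hh = \<alpha>\<^sup>2 + \<beta>\<^sup>2 / 2"
  have C0: "C \<ge> 0" using g by linarith
  have Y0: "Y \<ge> 0" using dY by linarith
  have H0: "Hh \<ge> 0" unfolding Hh_def by simp
  have ab: "2 * \<bar>\<alpha>\<bar> * \<bar>\<beta>\<bar> \<le> \<alpha>\<^sup>2 + \<beta>\<^sup>2"
    using sum_squares_bound[of "\<bar>\<alpha>\<bar>" "\<bar>\<beta>\<bar>"] by (simp add: power2_abs)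
  have ae: "2 * \<bar>\<alpha>\<bar> * \<bar>e\<bar> \<le> \<alpha>\<^sup>2 + e\<^sup>2"
    using sum_squares_bound[of "\<bar>\<alpha>\<bar>" "\<bar>e\<bar>"] by (simp add: power2_abs)
  have be: "2 * \<bar>\<beta>\<bar> * \<bar>e\<bar> \<le> \<beta>\<^sup>2 + e\<^sup>2"
    using sum_squares_bound[of "\<bar>\<beta>\<bar>" "\<bar>e\<bar>"] by (simp add: power2_abs)
  have p1: "\<bar>\<rho> * (\<alpha>\<^sup>2 + \<beta>\<^sup>2)\<bar> \<le> 2 * \<bar>\<rho>\<bar> * Hh"
  proof -
    have "\<bar>\<rho> * (\<alpha>\<^sup>2 + \<beta>\<^sup>2)\<bar> = \<bar>\<rho>\<bar> * (\<alpha>\<^sup>2 + \<beta>\<^sup>2)" by (simp add: abs_mult)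
    also have "\<dots> \<le> \<bar>\<rho>\<bar> * (2 * Hh)" by (rule mult_left_mono) (auto simp: Hh_def)
    finally show ?thesis by simp
  qed
  have p2: "\<bar>2 * \<beta> * \<alpha> * \<gamma>\<bar> \<le> 2 * C * Hh"
  proof -
    have "\<bar>2 * \<beta> * \<alpha> * \<gamma>\<bar> = (2 * \<bar>\<alpha>\<bar> * \<bar>\<beta>\<bar>) * \<bar>\<gamma>\<bar>" by (simp add: abs_mult)
    also have "\<dots> \<le> (\<alpha>\<^sup>2 + \<beta>\<^sup>2) * C" by (rule mult_mono[OF ab g]) auto
    also have "\<dots> \<le> 2 * C * Hh" unfolding Hh_def using C0 by (simp add: algebra_simps mult_left_mono)
    finally show ?thesis .
  qed
  have p3: "\<bar>2 * e * (\<alpha> * \<gamma>)\<bar> \<le> C * (Hh + e\<^sup>2)"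
  proof -
    have "\<bar>2 * e * (\<alpha> * \<gamma>)\<bar> = (2 * \<bar>\<alpha>\<bar> * \<bar>e\<bar>) * \<bar>\<gamma>\<bar>" by (simp add: abs_mult)
    also have "\<dots> \<le> (\<alpha>\<^sup>2 + e\<^sup>2) * C" by (rule mult_mono[OF ae g]) auto
    also have "\<dots> \<le> C * (Hh + e\<^sup>2)" unfolding Hh_def using C0
      by (simp add: algebra_simps mult_left_mono)
    finally show ?thesis .
  qed
  have p4: "\<bar>2 * e * (\<beta> * \<rho> / 2)\<bar> \<le> \<bar>\<rho>\<bar> * (Hh + e\<^sup>2)"
  proof -
    have "\<bar>2 * e * (\<beta> * \<rho> / 2)\<bar> = (\<bar>\<beta>\<bar> * \<bar>e\<bar>) * \<bar>\<rho>\<bar>" by (simp add: abs_mult)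
    also have "\<dots> \<le> (Hh + e\<^sup>2) * \<bar>\<rho>\<bar>"
    proof (rule mult_right_mono)
      show "\<bar>\<beta>\<bar> * \<bar>e\<bar> \<le> Hh + e\<^sup>2"
        unfolding Hh_def using be zero_le_power2[of \<alpha>] zero_le_power2[of e] by linarith
    qed simp
    finally show ?thesis by (simp add: mult.commute)
  qed
  have p5: "\<bar>d * Hh\<bar> \<le> 2 * Y * Hh"
    using H0 dY by (simp add: abs_mult mult_right_mono)
  have p6: "\<bar>e\<^sup>2 * d\<bar> \<le> 2 * Y * e\<^sup>2"
    using mult_right_mono[OF dY zero_le_power2[of e]] by (simp add: abs_mult mult.commute)
  have eq: "(- \<rho> * (\<alpha>\<^sup>2 + \<beta>\<^sup>2) - 2 * \<beta> * \<alpha> * \<gamma>) + 2 * e * (\<alpha> * \<gamma> + \<beta> * \<rho> / 2)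
           + d * (\<alpha>\<^sup>2 + \<beta>\<^sup>2 / 2) + e\<^sup>2 * d
       = - (\<rho> * (\<alpha>\<^sup>2 + \<beta>\<^sup>2)) - 2 * \<beta> * \<alpha> * \<gamma> + 2 * e * (\<alpha> * \<gamma>) + 2 * e * (\<beta> * \<rho> / 2)
           + d * Hh + e\<^sup>2 * d"
    unfolding Hh_def by (simp add: algebra_simps)
  have "\<bar>- (\<rho> * (\<alpha>\<^sup>2 + \<beta>\<^sup>2)) - 2 * \<beta> * \<alpha> * \<gamma> + 2 * e * (\<alpha> * \<gamma>) + 2 * e * (\<beta> * \<rho> / 2)
           + d * Hh + e\<^sup>2 * d\<bar>
     \<le> 2 * \<bar>\<rho>\<bar> * Hh + 2 * C * Hh + C * (Hh + e\<^sup>2) + \<bar>\<rho>\<bar> * (Hh + e\<^sup>2) + 2 * Y * Hh + 2 * Y * e\<^sup>2"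
    using p1 p2 p3 p4 p5 p6 by linarith
  also have "\<dots> \<le> (3 * \<bar>\<rho>\<bar> + 3 * C + 2 * Y) * (Hh + e\<^sup>2)"
  proof -
    have "0 \<le> \<bar>\<rho>\<bar> * e\<^sup>2" "0 \<le> C * e\<^sup>2" by (simp_all add: C0)
    then show ?thesis by (simp add: algebra_simps)
  qed
  finally show ?thesis unfolding eq Hh_def .
qed

definition nal :: "'n::finite \<Rightarrow> 'n pt \<Rightarrow> 'n pt \<Rightarrow> real" where
  "nal i z u = (fst u $ i - fst z $ i * snd u / snd z) / sqrt (snd z)"
definition nbe :: "'n::finite pt \<Rightarrow> 'n pt \<Rightarrow> real" where
  "nbe z u = snd u / snd z"

lemma sq_ex: assumes "snd z > (0::real)" obtains s where "s > 0" "snd z = s\<^sup>2" "sqrt (snd z) = s"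
  using assms by (metis real_sqrt_gt_zero real_sqrt_pow2 less_imp_le)

lemma H_norm: assumes "snd z > 0"
  shows "H i z u v = nal i z u * nal i z v + nbe z u * nbe z v / 2"
proof -
  obtain s where s: "s > 0" "snd z = s\<^sup>2" "sqrt (snd z) = s" using sq_ex[OF assms] by blast
  show ?thesis unfolding H_def nal_def nbe_def s(3) unfolding s(2)
    using s(1) by (simp add: field_simps) algebra
qed

lemma T_norm: assumes "snd z > 0"
  shows "T i z u v w = - (nbe z u * nal i z v * nal i z w + nbe z v * nal i z u * nal i z w
      + nbe z w * nal i z u * nal i z v) - nbe z u * nbe z v * nbe z w"
proof -
  obtain s where s: "s > 0" "snd z = s\<^sup>2" "sqrt (snd z) = s" using sq_ex[OF assms] by blast
  show ?thesis unfolding T_def nal_def nbe_def s(3) unfolding s(2)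
    using s(1) by (simp add: field_simps) algebra
qed

lemma X_norm: assumes "snd z > 0"
  shows "X i z v = (fst z $ i / sqrt (snd z)) * nal i z v + ((fst z $ i)\<^sup>2 / snd z) * nbe z v / 2 - nbe z v / 2"
proof -
  obtain s where s: "s > 0" "snd z = s\<^sup>2" "sqrt (snd z) = s" using sq_ex[OF assms] by blast
  show ?thesis unfolding X_def nal_def nbe_def s(3) unfolding s(2)
    using s(1) by (simp add: field_simps) algebra
qed

lemma pp_nonneg: "pp i z \<ge> 0"
  unfolding pp_def ee_def using SS_pos[of z] by simp

lemma Q2_diag: "Q2 z u u = (\<Sum>i\<in>UNIV. pp i z * (H i z u u + (Xc i z u)\<^sup>2))"
proof -
  have "(\<Sum>i\<in>UNIV. pp i z * (H i z u u + (Xc i z u)\<^sup>2))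
      = (\<Sum>i\<in>UNIV. pp i z * (H i z u u + X i z u * X i z u) - (2 * mm z u) * (pp i z * X i z u) + (mm z u)\<^sup>2 * pp i z)"
    by (rule sum.cong[OF refl]) (simp add: Xc_def power2_eq_square algebra_simps)
  also have "\<dots> = (\<Sum>i\<in>UNIV. pp i z * (H i z u u + X i z u * X i z u)) - (2 * mm z u) * mm z u + (mm z u)\<^sup>2"
    by (simp add: sum.distrib sum_subtractf sum_distrib_left[symmetric] pp_sum mm_def)
  also have "\<dots> = Q2 z u u" by (simp add: Q2_def power2_eq_square)
  finally show ?thesis by simp
qed

lemma abs_ratio: assumes "snd z > 0" "(fst z $ i)\<^sup>2 / snd z \<le> K"
  shows "\<bar>fst z $ i / sqrt (snd z)\<bar> \<le> sqrt K"
proof -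
  have "\<bar>fst z $ i / sqrt (snd z)\<bar> = sqrt ((fst z $ i / sqrt (snd z))\<^sup>2)" by simp
  also have "(fst z $ i / sqrt (snd z))\<^sup>2 = (fst z $ i)\<^sup>2 / snd z"
    using assms(1) by (simp add: power_divide)
  finally show ?thesis using assms(2) real_sqrt_le_mono by (metis)
qed

lemma pt_bound:
  fixes z u v :: "'n::finite pt"
  assumes t0: "snd z > 0" and Kb: "\<And>i. (fst z $ i)\<^sup>2 / snd z \<le> K" and K1: "K \<ge> 1"
  defines "C \<equiv> infnorm (fst v) / sqrt (snd z) + sqrt K * \<bar>nbe z v\<bar>"
    and "Y \<equiv> sqrt K * infnorm (fst v) / sqrt (snd z) + 2 * K * \<bar>nbe z v\<bar>"
  shows "\<bar>Q3 z u v u\<bar> \<le> (3 * \<bar>nbe z v\<bar> + 3 * C + 2 * Y) * Q2 z u u"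
proof -
  define L where "L = 3 * \<bar>nbe z v\<bar> + 3 * C + 2 * Y"
  have s0: "sqrt (snd z) > 0" using t0 by simp
  have K0: "K \<ge> 0" using K1 by linarith
  have sK: "sqrt K * sqrt K = K" using K0 by simp
  have sK0: "sqrt K \<ge> 0" using K0 by simp
  have gam: "\<bar>nal i z v\<bar> \<le> C" for i
  proof -
    have "nal i z v = fst v $ i / sqrt (snd z) - (fst z $ i / sqrt (snd z)) * nbe z v"
      unfolding nal_def nbe_def using s0 t0 by (simp add: field_simps)
    then have "\<bar>nal i z v\<bar> \<le> \<bar>fst v $ i / sqrt (snd z)\<bar> + \<bar>(fst z $ i / sqrt (snd z)) * nbe z v\<bar>"
      by (simp only: abs_triangle_ineq4)
    also have "\<dots> = \<bar>fst v $ i\<bar> / sqrt (snd z) + \<bar>fst z $ i / sqrt (snd z)\<bar> * \<bar>nbe z v\<bar>"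
      using s0 by (simp add: abs_mult abs_divide)
    also have "\<dots> \<le> infnorm (fst v) / sqrt (snd z) + sqrt K * \<bar>nbe z v\<bar>"
      apply (intro add_mono divide_right_mono mult_right_mono component_le_infnorm_cart abs_ratio[OF t0 Kb])
      using s0 by auto
    finally show ?thesis unfolding C_def .
  qed
  have Xb: "\<bar>X j z v\<bar> \<le> Y" for j
  proof -
    let ?r = "fst z $ j / sqrt (snd z)"
    have r2: "(fst z $ j)\<^sup>2 / snd z = ?r\<^sup>2" using t0 by (simp add: power_divide)
    have xe: "X j z v = ?r * nal j z v + ?r\<^sup>2 * nbe z v / 2 - nbe z v / 2"
      using X_norm[OF t0, of j v] r2 by simp
    have tri3: "\<bar>a + b - c\<bar> \<le> \<bar>a\<bar> + \<bar>b\<bar> + \<bar>c\<bar>" for a b c :: real by arith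
    have "\<bar>X j z v\<bar> \<le> \<bar>?r * nal j z v\<bar> + \<bar>?r\<^sup>2 * nbe z v / 2\<bar> + \<bar>nbe z v / 2\<bar>"
      unfolding xe by (rule tri3)
    also have "\<dots> = \<bar>?r\<bar> * \<bar>nal j z v\<bar> + ?r\<^sup>2 * \<bar>nbe z v\<bar> / 2 + \<bar>nbe z v\<bar> / 2"
      by (simp add: abs_mult)
    also have "\<dots> \<le> sqrt K * C + K * \<bar>nbe z v\<bar> / 2 + \<bar>nbe z v\<bar> / 2"
    proof -
      have "\<bar>?r\<bar> * \<bar>nal j z v\<bar> \<le> sqrt K * C"
        by (rule mult_mono[OF abs_ratio[OF t0 Kb] gam sK0]) simp
      moreover have "?r\<^sup>2 * \<bar>nbe z v\<bar> \<le> K * \<bar>nbe z v\<bar>"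
        by (rule mult_right_mono) (use Kb[of j] r2 in auto)
      ultimately show ?thesis by linarith
    qed
    also have "\<dots> \<le> Y"
    proof -
      have "sqrt K * C = sqrt K * infnorm (fst v) / sqrt (snd z) + (sqrt K * sqrt K) * \<bar>nbe z v\<bar>"
        unfolding C_def by (simp add: algebra_simps)
      then have "sqrt K * C = sqrt K * infnorm (fst v) / sqrt (snd z) + K * \<bar>nbe z v\<bar>"
        unfolding sK .
      moreover have "\<bar>nbe z v\<bar> \<le> K * \<bar>nbe z v\<bar>" using K1 by (simp add: mult_right_mono[of 1 K, simplified])
      ultimately show ?thesis unfolding Y_def by linarith
    qed
    finally show ?thesis .
  qed
  have mmb: "\<bar>mm z v\<bar> \<le> Y"
  proof -
    have "\<bar>mm z v\<bar> \<le> (\<Sum>j\<in>UNIV. \<bar>pp j z * X j z v\<bar>)" unfolding mm_def by (rule sum_abs)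
    also have "\<dots> \<le> (\<Sum>j\<in>UNIV. pp j z * Y)"
      by (rule sum_mono) (simp add: abs_mult pp_nonneg mult_left_mono Xb)
    also have "\<dots> = Y" by (simp add: sum_distrib_right[symmetric] pp_sum)
    finally show ?thesis .
  qed
  have db: "\<bar>Xc i z v\<bar> \<le> 2 * Y" for i
    using Xb[of i] mmb unfolding Xc_def by linarith
  have Ei: "\<bar>T i z u v u + Xc i z u * H i z u v + H i z u u * Xc i z v + H i z v u * Xc i z u
            + Xc i z u * Xc i z v * Xc i z u\<bar> \<le> L * (H i z u u + (Xc i z u)\<^sup>2)" for i
  proof -
    have e: "T i z u v u + Xc i z u * H i z u v + H i z u u * Xc i z v + H i z v u * Xc i z u
            + Xc i z u * Xc i z v * Xc i z u
        = (- nbe z v * ((nal i z u)\<^sup>2 + (nbe z u)\<^sup>2) - 2 * nbe z u * nal i z u * nal i z v)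
          + 2 * Xc i z u * (nal i z u * nal i z v + nbe z u * nbe z v / 2)
          + Xc i z v * ((nal i z u)\<^sup>2 + (nbe z u)\<^sup>2 / 2) + (Xc i z u)\<^sup>2 * Xc i z v"
      unfolding T_norm[OF t0] H_norm[OF t0] by (simp add: power2_eq_square algebra_simps)
    have h: "H i z u u = (nal i z u)\<^sup>2 + (nbe z u)\<^sup>2 / 2"
      unfolding H_norm[OF t0] by (simp add: power2_eq_square)
    show ?thesis unfolding e unfolding h L_def
      by (rule core[OF gam db])
  qed
  have "\<bar>Q3 z u v u\<bar> \<le> (\<Sum>i\<in>UNIV. \<bar>pp i z * (T i z u v u + Xc i z u * H i z u v + H i z u u * Xc i z v
      + H i z v u * Xc i z u + Xc i z u * Xc i z v * Xc i z u)\<bar>)"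
    unfolding Q3_def by (rule sum_abs)
  also have "\<dots> \<le> (\<Sum>i\<in>UNIV. pp i z * (L * (H i z u u + (Xc i z u)\<^sup>2)))"
    by (rule sum_mono) (simp add: abs_mult pp_nonneg mult_left_mono Ei)
  also have "\<dots> = L * Q2 z u u"
    by (simp add: Q2_diag sum_distrib_left algebra_simps)
  finally show ?thesis unfolding L_def .
qed

lemma Q2_nonneg: assumes "snd z > 0" shows "Q2 z u u \<ge> 0"
  unfolding Q2_diag
  by (intro sum_nonneg mult_nonneg_nonneg pp_nonneg add_nonneg_nonneg) (simp_all add: H_norm[OF assms])

lemma final_coef:
  fixes P Q P' Q' r K :: real
  assumes "0 \<le> P" "P \<le> P'" "0 \<le> Q" "Q \<le> Q'" "1 \<le> r" "r \<le> K"
  shows "3 * P + 3 * (Q + r * P) + 2 * (r * Q + 2 * K * P) \<le> 8 * r * Q' + 16 * K * P'"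
proof -
  have a: "r * P \<le> K * P" by (rule mult_right_mono) (use assms in auto)
  have b: "P \<le> K * P" using mult_right_mono[of 1 K P] assms by auto
  have c: "K * P \<le> K * P'" by (rule mult_left_mono) (use assms in auto)
  have d: "Q \<le> r * Q" using mult_right_mono[of 1 r Q] assms by auto
  have e: "r * Q \<le> r * Q'" by (rule mult_left_mono) (use assms in auto)
  have f: "0 \<le> K * P'" "0 \<le> r * Q'" using assms by auto
  have g: "8 * r * Q' = 8 * (r * Q')" "16 * K * P' = 16 * (K * P')" "2 * K * P = 2 * (K * P)" by simp_all
  show ?thesis unfolding g using a b c d e f by (smt (verit))
qed

theorem proposition6p10:
  fixes x dx :: "real^'n" and t dt :: real
  assumes "t > 0" and "t + dt > 0"
  defines "tstar \<equiv> Inf ((\<lambda>s. t + s * dt) ` {0..1})"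
    and "Kseg \<equiv> Sup ((\<lambda>s. Max (range (\<lambda>i. (x $ i + s * dx $ i)\<^sup>2 / (t + s * dt)))) ` {0..1})"
  shows "gen_self_concordant (logPhi :: (real^'n) \<times> real \<Rightarrow> real) {z. snd z > 0}
           (\<lambda>(xb, tb). (8 * sqrt (max Kseg 1) / sqrt tstar) * infnorm xb
                       + (16 * max Kseg 1 / tstar) * \<bar>tb\<bar>) 1
           {(x + s *\<^sub>R dx, t + s * dt) | s. s \<in> {0..1}}"
proof -
  define m0 where "m0 = min t (t + dt)"
  have m0: "m0 > 0" using assms(1,2) by (simp add: m0_def)
  have aff: "t + s * dt \<ge> m0" if "s \<in> {0..1}" for s
  proof (cases "dt \<ge> 0")
    case True then show ?thesis using that by (simp add: m0_def)
  next
    case False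
    have "(1 - s) * dt \<le> 0" using that False by (intro mult_nonneg_nonpos) auto
    then show ?thesis by (simp add: m0_def algebra_simps)
  qed
  have ts_ge: "tstar \<ge> m0" unfolding tstar_def
    by (rule cInf_greatest) (use aff in auto)
  have ts_le: "tstar \<le> t + s * dt" if "s \<in> {0..1}" for s
    unfolding tstar_def
    by (rule cInf_lower) (use that aff in \<open>auto intro!: bdd_belowI[of _ m0]\<close>)
  have ts0: "tstar > 0" using ts_ge m0 by linarith
  define g where "g s = Max (range (\<lambda>i. (x $ i + s * dx $ i)\<^sup>2 / (t + s * dt)))" for s
  define M where "M = (\<Sum>i\<in>UNIV. (\<bar>x $ i\<bar> + \<bar>dx $ i\<bar>)\<^sup>2) / m0"
  have term_le: "(x $ i + s * dx $ i)\<^sup>2 / (t + s * dt) \<le> M" if s: "s \<in> {0..1}" for i s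
  proof -
    have "\<bar>x $ i + s * dx $ i\<bar> \<le> \<bar>x $ i\<bar> + \<bar>dx $ i\<bar>"
    proof -
      have "\<bar>s * dx $ i\<bar> \<le> \<bar>dx $ i\<bar>" using s by (simp add: abs_mult mult_left_le_one_le)
      then show ?thesis by linarith
    qed
    then have "(x $ i + s * dx $ i)\<^sup>2 \<le> (\<bar>x $ i\<bar> + \<bar>dx $ i\<bar>)\<^sup>2"
      by (metis abs_ge_zero power2_abs power_mono)
    then have "(x $ i + s * dx $ i)\<^sup>2 / (t + s * dt) \<le> (\<bar>x $ i\<bar> + \<bar>dx $ i\<bar>)\<^sup>2 / (t + s * dt)"
      using aff[OF s] m0 by (simp add: divide_right_mono)
    also have "\<dots> \<le> (\<bar>x $ i\<bar> + \<bar>dx $ i\<bar>)\<^sup>2 / m0"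
      using aff[OF s] m0 by (intro divide_left_mono) auto
    also have "\<dots> \<le> M" unfolding M_def
      using m0 by (intro divide_right_mono member_le_sum) auto
    finally show ?thesis .
  qed
  have g_le: "g s \<le> M" if "s \<in> {0..1}" for s
    unfolding g_def using term_le[OF that] by (subst Max_le_iff) auto
  have bdd: "bdd_above (g ` {0..1})" using g_le by (auto intro!: bdd_aboveI[of _ M])
  define K where "K = max Kseg 1"
  have K1: "K \<ge> 1" by (simp add: K_def)
  have Kb: "(x $ i + s * dx $ i)\<^sup>2 / (t + s * dt) \<le> K" if "s \<in> {0..1}" for i s
  proof -
    have "(x $ i + s * dx $ i)\<^sup>2 / (t + s * dt) \<le> g s" unfolding g_def by (rule Max_ge) auto
    also have "g s \<le> Kseg" unfolding Kseg_def g_def[symmetric]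
      by (rule cSup_upper) (use that bdd in auto)
    finally show ?thesis unfolding K_def by linarith
  qed
  show ?thesis
    unfolding gen_self_concordant_def
  proof (intro conjI exI[of _ f1] exI[of _ f2] exI[of _ f3])
    show "open {z :: 'n pt. snd z > 0}" by (rule open_Dom)
    show "{(x + s *\<^sub>R dx, t + s * dt) | s. s \<in> {0..1}} \<subseteq> {z. snd z > 0}"
      using aff m0 by force
    show "C3_derivs_on {z :: 'n pt. snd z > 0} logPhi f1 f2 f3" by (rule C3)
    show "\<forall>z\<in>{(x + s *\<^sub>R dx, t + s * dt) | s. s \<in> {0..1}}. \<forall>u v.
        \<bar>blinfun_apply (blinfun_apply (blinfun_apply (f3 z) u) u) v\<bar>
          \<le> 1 * (case v of (xb, tb) \<Rightarrow> 8 * sqrt (max Kseg 1) / sqrt tstar * infnorm xb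
                 + 16 * max Kseg 1 / tstar * \<bar>tb\<bar>) * blinfun_apply (blinfun_apply (f2 z) u) u"
    proof (intro ballI allI)
      fix z u v :: "'n pt"
      assume "z \<in> {(x + s *\<^sub>R dx, t + s * dt) | s. s \<in> {0..1}}"
      then obtain s where s: "s \<in> {0..1}" and z: "z = (x + s *\<^sub>R dx, t + s * dt)" by blast
      have tz: "snd z > 0" using aff[OF s] m0 z by simp
      have tzs: "tstar \<le> snd z" using ts_le[OF s] z by simp
      have Kz: "(fst z $ i)\<^sup>2 / snd z \<le> K" for i using Kb[OF s, of i] z by simp
      note pb = pt_bound[OF tz Kz K1, of u v]
      define B where "B = infnorm (fst v)"
      have B0: "B \<ge> 0" by (simp add: B_def infnorm_pos_le)
      have sK1: "1 \<le> sqrt K" using K1 by simp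
      have sKK: "sqrt K \<le> K"
      proof -
        have "sqrt K * 1 \<le> sqrt K * sqrt K" by (rule mult_left_mono[OF sK1]) (use sK1 in linarith)
        moreover have "sqrt K * sqrt K = K" using K1 by simp
        ultimately show ?thesis by linarith
      qed
      have P: "\<bar>nbe z v\<bar> \<le> \<bar>snd v\<bar> / tstar"
        unfolding nbe_def using tz ts0 tzs by (simp add: abs_divide divide_left_mono)
      have Q: "B / sqrt (snd z) \<le> B / sqrt tstar"
        using tz ts0 tzs B0 by (intro divide_left_mono) auto
      have coef: "3 * \<bar>nbe z v\<bar> + 3 * (B / sqrt (snd z) + sqrt K * \<bar>nbe z v\<bar>)
          + 2 * (sqrt K * B / sqrt (snd z) + 2 * K * \<bar>nbe z v\<bar>)
          \<le> 8 * sqrt K / sqrt tstar * B + 16 * K / tstar * \<bar>snd v\<bar>"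
      proof -
        have "3 * \<bar>nbe z v\<bar> + 3 * (B / sqrt (snd z) + sqrt K * \<bar>nbe z v\<bar>)
          + 2 * (sqrt K * (B / sqrt (snd z)) + 2 * K * \<bar>nbe z v\<bar>)
          \<le> 8 * sqrt K * (B / sqrt tstar) + 16 * K * (\<bar>snd v\<bar> / tstar)"
          by (rule final_coef[OF _ P _ Q sK1 sKK]) (use B0 tz in auto)
        then show ?thesis by (simp add: algebra_simps)
      qed
      have "\<bar>blinfun_apply (blinfun_apply (blinfun_apply (f3 z) u) u) v\<bar> = \<bar>Q3 z u v u\<bar>" by simp
      also have "\<dots> \<le> (3 * \<bar>nbe z v\<bar> + 3 * (B / sqrt (snd z) + sqrt K * \<bar>nbe z v\<bar>)
          + 2 * (sqrt K * B / sqrt (snd z) + 2 * K * \<bar>nbe z v\<bar>)) * Q2 z u u"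
        using pb unfolding B_def .
      also have "\<dots> \<le> (8 * sqrt K / sqrt tstar * B + 16 * K / tstar * \<bar>snd v\<bar>) * Q2 z u u"
        by (rule mult_right_mono[OF coef Q2_nonneg[OF tz]])
      also have "\<dots> = 1 * (case v of (xb, tb) \<Rightarrow> 8 * sqrt (max Kseg 1) / sqrt tstar * infnorm xb
                 + 16 * max Kseg 1 / tstar * \<bar>tb\<bar>) * blinfun_apply (blinfun_apply (f2 z) u) u"
        by (simp add: B_def K_def case_prod_unfold)
      finally show "\<bar>blinfun_apply (blinfun_apply (blinfun_apply (f3 z) u) u) v\<bar>
          \<le> 1 * (case v of (xb, tb) \<Rightarrow> 8 * sqrt (max Kseg 1) / sqrt tstar * infnorm xb
                 + 16 * max Kseg 1 / tstar * \<bar>tb\<bar>) * blinfun_apply (blinfun_apply (f2 z) u) u" .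
    qed
  qed
qed

end
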